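(* Let $k$ and $M$ be positive integers, and let $M=p_{1}^{e_{1}}p_{2}^{e_{2}}\cdots p_{l}^{e_{l}}$ be the prime factorization of $M$, where $p_1,\dots,p_l$ are distinct primes. For any integers $n,m\geq \max\{e_j \mid 1\leq j\leq l\}$ satisfying $n\equiv m \pmod{\varphi(M)}$, we have \[ B^{(-k)}_{n}\equiv B^{(-k)}_{m}\pmod{M}. \]
   Context: For any integer $k$, let $\mathrm{Li}_k(t)=\sum_{n=1}^{\infty} t^n/n^k$. The poly-Bernoulli numbers $B^{(k)}_n$ ($n\ge 0$) are defined by the generating series $\frac{\mathrm{Li}_k(1-e^{-t})}{1-e^{-t}}=\sum_{n=0}^{\infty}B^{(k)}_n\frac{t^n}{n!}$. For negative upper index these are integers. $\varphi$ denotes Euler's totient function. *)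

theory Defs
  imports Complex_Main "HOL-Computational_Algebra.Formal_Power_Series" "HOL-Number_Theory.Number_Theory"
begin

definition Li_fps :: "int \<Rightarrow> real fps" where
  "Li_fps k = Abs_fps (\<lambda>n. if n = 0 then 0 else 1 / ((of_nat n :: real) powi k))"

definition one_minus_exp_neg :: "real fps" where
  "one_minus_exp_neg = 1 - fps_exp (-1)"

definition poly_bernoulli_gf :: "int \<Rightarrow> real fps" where
  "poly_bernoulli_gf k = fps_compose (Li_fps k) one_minus_exp_neg / one_minus_exp_neg"

definition poly_bernoulli :: "int \<Rightarrow> nat \<Rightarrow> real" where
  "poly_bernoulli k n = fps_nth (poly_bernoulli_gf k) n * fact n"

end

theory Submission
  imports Defs
begin

inductive expc :: "real fps \<Rightarrow> bool" where
  expc_zero: "expc 0"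
| expc_add: "expc F \<Longrightarrow> expc G \<Longrightarrow> expc (F + G)"
| expc_neg: "expc F \<Longrightarrow> expc (- F)"
| expc_exp: "expc (fps_exp (of_nat a))"

lemma expc_nat_mult: "expc F \<Longrightarrow> expc (of_nat j * F)"
proof (induction j)
  case 0 then show ?case by (simp add: expc_zero)
next
  case (Suc j) then show ?case by (simp add: distrib_right expc_add)
qed

lemma expc_deriv: "expc F \<Longrightarrow> expc (fps_deriv F)"
proof (induction rule: expc.induct)
  case expc_zero then show ?case by (simp add: expc.expc_zero)
next
  case (expc_add F G) then show ?case by (simp add: expc.expc_add)
next
  case (expc_neg F) then show ?case by (simp add: expc.expc_neg)
next
  case (expc_exp a)
  have "fps_deriv (fps_exp (of_nat a :: real)) = of_nat a * fps_exp (of_nat a)"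
    by (simp add: fps_of_nat)
  then show ?case using expc_nat_mult[OF expc.expc_exp] by simp
qed

lemma expc_exp1: "expc F \<Longrightarrow> expc (fps_exp 1 * F)"
proof (induction rule: expc.induct)
  case expc_zero then show ?case by (simp add: expc.expc_zero)
next
  case (expc_add F G) then show ?case by (simp add: distrib_left expc.expc_add)
next
  case (expc_neg F) then show ?case by (simp add: expc.expc_neg)
next
  case (expc_exp a)
  have "fps_exp 1 * fps_exp (of_nat a :: real) = fps_exp (of_nat (Suc a))"
    by (simp add: fps_exp_add_mult[symmetric] add.commute)
  then show ?case using expc.expc_exp[of "Suc a"] by simp
qed

lemma pow_cong:
  fixes a M n m :: nat
  assumes "M > 0"
    and "\<forall>p\<in>prime_factors M. multiplicity p M \<le> n"
    and "\<forall>p\<in>prime_factors M. multiplicity p M \<le> m"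
    and "[n = m] (mod totient M)" and "n \<le> m"
  shows "M dvd a ^ m - a ^ n"
proof -
  from assms(4,5) obtain t where m: "m = t * totient M + n"
    using cong_le_nat[of n m "totient M"] cong_sym by blast
  show ?thesis
  proof (cases "a = 0")
    case True
    then have "a ^ m - a ^ n = 0" using \<open>n \<le> m\<close> by (cases n; cases m) auto
    then show ?thesis by simp
  next
    case False
    define y where "y = a ^ n * (a ^ (t * totient M) - 1)"
    have y: "a ^ m - a ^ n = y"
      unfolding y_def m by (simp add: power_add diff_mult_distrib2 mult.commute)
    show ?thesis
    proof (cases "y = 0")
      case True then show ?thesis using y by simp
    next
      case ynz: False
      have "M dvd y"
      proof (rule multiplicity_le_imp_dvd)
        show "M \<noteq> 0" using assms(1) by simp
      next
        fix p :: nat assume p: "prime p"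
        define e where "e = multiplicity p M"
        show "multiplicity p M \<le> multiplicity p y"
        proof (cases "e = 0")
          case True then show ?thesis by (simp add: e_def)
        next
          case False
          then have "p dvd M" using prime_multiplicity_gt_zero_iff[of p M] p assms(1)
            by (simp add: e_def)
          then have "p \<in> prime_factors M" using p assms(1) by (simp add: in_prime_factors_iff)
          then have en: "e \<le> n" using assms(2) e_def by blast
          have pe: "p ^ e dvd M" unfolding e_def by (rule multiplicity_dvd)
          have "p ^ e dvd y"
          proof (cases "p dvd a")
            case True
            have "p ^ e dvd p ^ n" using en by (simp add: le_imp_power_dvd)
            also have "p ^ n dvd a ^ n" using True by (simp add: dvd_power_same)
            also have "a ^ n dvd y" unfolding y_def by simp
            finally show ?thesis .
          next
            case False
            then have "coprime a p" using p by (metis prime_imp_coprime coprime_commute)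
            then have "coprime a (p ^ e)" by simp
            then have c1: "[a ^ totient (p ^ e) = 1] (mod p ^ e)" by (rule euler_theorem)
            have "totient (p ^ e) dvd totient M" using pe by (rule totient_dvd)
            then obtain s where s: "t * totient M = totient (p ^ e) * s"
              by (metis dvd_def mult.commute mult.left_commute)
            have "[(a ^ totient (p ^ e)) ^ s = 1 ^ s] (mod p ^ e)" using c1 by (rule cong_pow)
            then have "[a ^ (t * totient M) = 1] (mod p ^ e)" by (simp add: s power_mult)
            then have "p ^ e dvd a ^ (t * totient M) - 1" by (rule cong_to_1_nat)
            then show ?thesis unfolding y_def by simp
          qed
          moreover have "\<not> is_unit p" using p by (simp add: prime_nat_iff)
          ultimately show ?thesis using ynz unfolding e_def
            by (intro multiplicity_geI)
        qed
      qed
      then show ?thesis using y by simp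
    qed
  qed
qed

lemma pow_cong_int:
  fixes a M n m :: nat
  assumes "M > 0"
    and "\<forall>p\<in>prime_factors M. multiplicity p M \<le> n"
    and "\<forall>p\<in>prime_factors M. multiplicity p M \<le> m"
    and "[n = m] (mod totient M)"
  shows "\<exists>c::int. real a ^ n - real a ^ m = of_int (int M * c)"
proof (cases "M = 1")
  case True
  then show ?thesis by (intro exI[of _ "int (a ^ n) - int (a ^ m)"]) simp
next
  case M1: False
  obtain p where p: "prime p" "p dvd M" using prime_factor_nat[OF M1] by blast
  then have pf: "p \<in> prime_factors M" using assms(1) by (simp add: in_prime_factors_iff)
  have "multiplicity p M > 0" using p assms(1) prime_multiplicity_gt_zero_iff[of p M] by simp
  then have nm: "n > 0" "m > 0" using pf assms(2,3) by fastforce+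
  have mono: "a ^ x \<le> a ^ y" if "x \<le> y" "x > 0" for x y
  proof (cases "a = 0")
    case True then show ?thesis using that by (simp add: power_0_left)
  next
    case False then show ?thesis using that by (simp add: power_increasing)
  qed
  show ?thesis
  proof (cases "n \<le> m")
    case True
    then have "M dvd a ^ m - a ^ n" using pow_cong[OF assms] by blast
    then obtain c where c: "a ^ m - a ^ n = M * c" by blast
    have le: "a ^ n \<le> a ^ m" using mono True nm by blast
    have "real (a ^ m) - real (a ^ n) = real (M * c)" by (simp only: of_nat_diff[OF le, symmetric] c)
    then show ?thesis by (intro exI[of _ "- int c"]) (simp add: algebra_simps)
  next
    case False
    then have "M dvd a ^ n - a ^ m" using pow_cong[OF assms(1,3,2) cong_sym[OF assms(4)]] by simp
    then obtain c where c: "a ^ n - a ^ m = M * c" by blast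
    have le: "a ^ m \<le> a ^ n" using mono False nm by simp
    have "real (a ^ n) - real (a ^ m) = real (M * c)" by (simp only: of_nat_diff[OF le, symmetric] c)
    then show ?thesis by (intro exI[of _ "int c"]) (simp add: algebra_simps)
  qed
qed

lemma Li_nth: "fps_nth (Li_fps (- int k)) n = (if n = 0 then 0 else real n ^ k)"
  by (simp add: Li_fps_def power_int_minus divide_inverse)

lemma Li_succ: "Li_fps (- int (Suc j)) = fps_X * fps_deriv (Li_fps (- int j))"
proof (rule fps_ext)
  fix n
  show "fps_nth (Li_fps (- int (Suc j))) n = fps_nth (fps_X * fps_deriv (Li_fps (- int j))) n"
    unfolding Li_nth fps_X_mult_nth fps_deriv_nth by (cases n) (auto simp: Li_nth)
qed

lemma Li0: "(1 - fps_X) * Li_fps 0 = fps_X"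
  by (auto simp: fps_eq_iff Li_fps_def algebra_simps)

definition LL :: "nat \<Rightarrow> real fps" where
  "LL j = Li_fps (- int j) oo one_minus_exp_neg"

lemma E0: "fps_nth one_minus_exp_neg 0 = 0"
  by (simp add: one_minus_exp_neg_def)

lemma dE: "fps_deriv one_minus_exp_neg = fps_exp (-1)"
proof -
  have "fps_const (-1::real) = -1" by (simp add: fps_eq_iff)
  then show ?thesis by (simp add: one_minus_exp_neg_def)
qed

lemma exp_inv: "fps_exp (1::real) * fps_exp (-1) = 1"
  by (simp add: fps_exp_add_mult[symmetric])

lemma LL_Suc: "LL (Suc j) = (fps_exp 1 - 1) * fps_deriv (LL j)"
proof -
  let ?E = one_minus_exp_neg
  let ?D = "fps_deriv (Li_fps (- int j)) oo ?E"
  have a: "LL (Suc j) = ?E * ?D"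
    unfolding LL_def Li_succ by (simp add: fps_compose_mult_distrib E0)
  have b: "fps_deriv (LL j) = ?D * fps_exp (-1)"
    unfolding LL_def by (simp add: fps_compose_deriv E0 dE)
  have c: "(fps_exp 1 - 1) * fps_exp (-1) = ?E"
    by (simp add: one_minus_exp_neg_def algebra_simps exp_inv)
  show ?thesis unfolding a b c[symmetric] by (simp only: mult.assoc mult.commute mult.left_commute)
qed

lemma LL0: "LL 0 = fps_exp 1 - 1"
proof -
  let ?E = one_minus_exp_neg
  have "((1 - fps_X) * Li_fps 0) oo ?E = ?E" by (simp add: Li0 E0)
  then have "fps_exp (-1) * LL 0 = ?E"
    by (simp add: LL_def fps_compose_mult_distrib E0 fps_compose_sub_distrib one_minus_exp_neg_def)
  then have "fps_exp 1 * (fps_exp (-1) * LL 0) = fps_exp 1 * ?E" by simp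
  then show ?thesis by (simp add: mult.assoc[symmetric] exp_inv one_minus_exp_neg_def algebra_simps)
qed

lemma expc_LL: "expc (LL j)"
proof (induction j)
  case 0
  have "LL 0 = fps_exp (of_nat 1) + - fps_exp (of_nat 0)" by (simp add: LL0)
  then show ?case by (metis expc_add expc_neg expc_exp)
next
  case (Suc j)
  have "LL (Suc j) = fps_exp 1 * fps_deriv (LL j) + - fps_deriv (LL j)"
    by (simp add: LL_Suc algebra_simps)
  then show ?case using Suc by (metis expc_add expc_neg expc_exp1 expc_deriv)
qed

lemma E_ne: "one_minus_exp_neg \<noteq> 0"
proof
  assume "one_minus_exp_neg = 0"
  then have "fps_exp (-1::real) = 1" by (simp add: one_minus_exp_neg_def)
  then show False by simp
qed

lemma gf_expc: "expc (poly_bernoulli_gf (- int (Suc j)))"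
proof -
  let ?E = one_minus_exp_neg
  have "fps_exp 1 - 1 = ?E * fps_exp 1"
    by (simp add: one_minus_exp_neg_def algebra_simps exp_inv)
  have "poly_bernoulli_gf (- int (Suc j)) = LL (Suc j) / ?E"
    by (simp only: poly_bernoulli_gf_def LL_def)
  also have "\<dots> = (?E * (fps_exp 1 * fps_deriv (LL j))) / ?E"
    unfolding LL_Suc \<open>fps_exp 1 - 1 = ?E * fps_exp 1\<close> by (simp only: mult.assoc)
  also have "\<dots> = fps_exp 1 * fps_deriv (LL j)" using E_ne by simp
  finally show ?thesis using expc_LL expc_exp1 expc_deriv by metis
qed

lemma expc_cong:
  fixes M n m :: nat
  assumes "expc G" "M > 0"
    and "\<forall>p\<in>prime_factors M. multiplicity p M \<le> n"
    and "\<forall>p\<in>prime_factors M. multiplicity p M \<le> m"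
    and "[n = m] (mod totient M)"
  shows "\<exists>c::int. fps_nth G n * fact n - fps_nth G m * fact m = of_int (int M * c)"
  using assms(1)
proof (induction rule: expc.induct)
  case expc_zero then show ?case by (intro exI[of _ 0]) simp
next
  case (expc_add F G)
  then obtain c d where "fps_nth F n * fact n - fps_nth F m * fact m = of_int (int M * c)"
    "fps_nth G n * fact n - fps_nth G m * fact m = of_int (int M * d)" by blast
  then show ?case by (intro exI[of _ "c + d"]) (simp add: algebra_simps)
next
  case (expc_neg F)
  then obtain c where "fps_nth F n * fact n - fps_nth F m * fact m = of_int (int M * c)" by blast
  then show ?case by (intro exI[of _ "- c"]) (simp add: algebra_simps)
next
  case (expc_exp a)
  then show ?case using pow_cong_int[OF assms(2-5), of a] by simp
qed

theorem corollary2p3: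
  fixes k M n m :: nat
  assumes "k > 0" and "M > 0"
    and "\<forall>p\<in>prime_factors M. multiplicity p M \<le> n"
    and "\<forall>p\<in>prime_factors M. multiplicity p M \<le> m"
    and "[n = m] (mod totient M)"
  shows "\<exists>c::int. poly_bernoulli (- int k) n - poly_bernoulli (- int k) m = of_int (int M * c)"
proof -
  obtain j where k: "k = Suc j" using assms(1) gr0_implies_Suc by blast
  show ?thesis unfolding poly_bernoulli_def k
    using expc_cong[OF gf_expc assms(2-5)] by blast
qed

end
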